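(* Let $G$ be a finite group with $m^*(G) = |G|$. Then $G$ contains no non-trivial normal cyclic subgroups.
   Context: For $H \leq G$, $m_G(H) = |H|\,|C_G(H)|$ and $m^*(G) = \max\{ m_G(H) : H \leq G\}$. *)

theory Defs
  imports "HOL-Algebra.Algebra"
begin

definition centralizer :: "('a, 'b) monoid_scheme \<Rightarrow> 'a set \<Rightarrow> 'a set" where
  "centralizer G H = {g \<in> carrier G. \<forall>h\<in>H. g \<otimes>\<^bsub>G\<^esub> h = h \<otimes>\<^bsub>G\<^esub> g}"

definition mG :: "('a, 'b) monoid_scheme \<Rightarrow> 'a set \<Rightarrow> nat" where
  "mG G H = card H * card (centralizer G H)"

definition m_star :: "('a, 'b) monoid_scheme \<Rightarrow> nat" where
  "m_star G = Max {mG G H | H. subgroup H G}"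

end

theory Submission
  imports Defs
begin

lemma (in group) cyc_gen:
  assumes "subgroup N G" "cyclic_group (subgroup_generated G N)"
  shows "\<exists>x\<in>N. generate G {x} = N"
proof -
  have cN: "carrier (subgroup_generated G N) = N"
    using assms(1) subgroup.carrier_subgroup_generated_subgroup by blast
  obtain x where x: "x \<in> N" "subgroup_generated (subgroup_generated G N) {x} = subgroup_generated G N"
    using assms(2) cN unfolding cyclic_group_def by auto
  have eqG: "subgroup_generated G N = G\<lparr>carrier := N\<rparr>"
    using cN unfolding subgroup_generated_def by (metis carrier_subgroup_generated subgroup_generated_def)
  have "carrier (subgroup_generated (subgroup_generated G N) {x}) = N"
    using x cN by simp
  hence "generate (subgroup_generated G N) {x} = N"
    using x(1) cN by (simp add: carrier_subgroup_generated)
  hence "generate (G\<lparr>carrier := N\<rparr>) {x} = N" using eqG by simp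
  thus ?thesis using generate_consistent[of "{x}" N] x(1) assms(1) by auto
qed

lemma (in group) comm_gen:
  assumes "g \<in> carrier G" "x \<in> carrier G" "g \<otimes> x = x \<otimes> g"
  shows "generate G {x} \<subseteq> {y \<in> carrier G. g \<otimes> y = y \<otimes> g}"
proof -
  have "subgroup {y \<in> carrier G. g \<otimes> y = y \<otimes> g} G"
  proof (rule subgroupI)
    fix a assume "a \<in> {y \<in> carrier G. g \<otimes> y = y \<otimes> g}"
    hence a: "a \<in> carrier G" "g \<otimes> a = a \<otimes> g" by auto
    have "g \<otimes> inv a = inv a \<otimes> (a \<otimes> g) \<otimes> inv a" using a assms(1)
      by (simp add: m_assoc[symmetric])
    also have "\<dots> = inv a \<otimes> g" using a assms(1)
      by (metis a(2) inv_closed inv_solve_right' m_assoc m_closed)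
    finally show "inv a \<in> {y \<in> carrier G. g \<otimes> y = y \<otimes> g}" using a by auto
  next
    fix a b assume "a \<in> {y \<in> carrier G. g \<otimes> y = y \<otimes> g}" "b \<in> {y \<in> carrier G. g \<otimes> y = y \<otimes> g}"
    thus "a \<otimes> b \<in> {y \<in> carrier G. g \<otimes> y = y \<otimes> g}" using assms(1)
      by (auto simp: m_assoc[symmetric]) (simp add: m_assoc)
  qed (use assms in auto)
  thus ?thesis using generate_subgroup_incl[of "{x}"] assms by auto
qed

lemma (in group) prop6_aux:
  assumes "finite (carrier G)" and "m_star G = order G"
  shows "\<forall>N. N \<lhd> G \<and> cyclic_group (subgroup_generated G N) \<longrightarrow> N = {\<one>\<^bsub>G\<^esub>}"
proof (intro allI impI)
  fix N assume A: "N \<lhd> G \<and> cyclic_group (subgroup_generated G N)"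
  have nN: "N \<lhd> G" using A by auto
  have sN: "subgroup N G" using nN normal_imp_subgroup by blast
  obtain x where x: "x \<in> N" "generate G {x} = N" using cyc_gen[OF sN] A by auto
  have xc: "x \<in> carrier G" using x sN subgroup.subset by blast
  have oneN: "\<one> \<in> N" using sN subgroup.one_closed by blast
  show "N = {\<one>}"
  proof (rule ccontr)
    assume ne: "N \<noteq> {\<one>}"
    have x1: "x \<noteq> \<one>"
    proof
      assume "x = \<one>"
      hence "N \<subseteq> {\<one>}" using x generate_subgroup_incl[of "{x}" "{\<one>}"] triv_subgroup by auto
      thus False using ne oneN by auto
    qed
    define phi where "phi = (\<lambda>g. (\<lambda>h \<in> carrier G. g \<otimes> h \<otimes> (inv g)))"
    interpret ga: group_action G "carrier G" phi unfolding phi_def by (rule action_by_conjugation)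
    define C where "C = centralizer G N"
    have finN: "finite N" using sN subgroup.subset assms(1) finite_subset by blast
    have finC: "finite C" unfolding C_def centralizer_def using assms(1) by auto
    have oneC: "\<one> \<in> C" unfolding C_def centralizer_def using sN subgroup.subset by fastforce
    have stab: "stabilizer G phi x \<subseteq> C"
    proof
      fix g assume g: "g \<in> stabilizer G phi x"
      hence gc: "g \<in> carrier G" and e: "g \<otimes> x \<otimes> inv g = x"
        unfolding stabilizer_def phi_def using xc by auto
      have "g \<otimes> x = x \<otimes> g" using e gc xc
        by (metis inv_solve_right m_closed)
      hence "N \<subseteq> {y \<in> carrier G. g \<otimes> y = y \<otimes> g}" using comm_gen[OF gc xc] x by auto
      thus "g \<in> C" unfolding C_def centralizer_def using gc by auto
    qed
    have orb: "orbit G phi x \<subseteq> N - {\<one>}"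
    proof
      fix y assume "y \<in> orbit G phi x"
      then obtain g where g: "g \<in> carrier G" "y = g \<otimes> x \<otimes> inv g"
        unfolding orbit_def phi_def using xc by auto
      have "y \<in> N" using g normal.inv_op_closed2[OF nN g(1) x(1)] by simp
      moreover have "y \<noteq> \<one>"
      proof
        assume "y = \<one>"
        hence "g \<otimes> x \<otimes> inv g = g \<otimes> \<one> \<otimes> inv g" using g by simp
        thus False using x1 conjugation_is_inj[OF g(1) xc one_closed] by simp
      qed
      ultimately show "y \<in> N - {\<one>}" by simp
    qed
    have eq: "card (orbit G phi x) * card (stabilizer G phi x) = order G"
      using ga.orbit_stabilizer_theorem xc by simp
    have c1: "card (orbit G phi x) \<le> card N - 1"
      using card_mono[OF _ orb] finN oneN by (simp add: card_Diff_singleton)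
    have c2: "card (stabilizer G phi x) \<le> card C" using card_mono[OF finC stab] .
    have Cpos: "card C > 0" using finC oneC card_gt_0_iff by blast
    have Npos: "card N > 0" using finN oneN card_gt_0_iff by blast
    have "order G \<le> (card N - 1) * card C" using eq c1 c2 mult_le_mono by metis
    also have "\<dots> < card N * card C" using Cpos Npos by simp
    also have "\<dots> = mG G N" unfolding mG_def C_def by simp
    also have "\<dots> \<le> m_star G" unfolding m_star_def
    proof (rule Max_ge)
      have "{mG G H | H. subgroup H G} \<subseteq> mG G ` Pow (carrier G)"
        using subgroup.subset by blast
      thus "finite {mG G H | H. subgroup H G}" using assms(1) finite_subset by blast
      show "mG G N \<in> {mG G H | H. subgroup H G}" using sN by blast
    qed
    finally show False using assms(2) by simp
  qed
qed

theorem proposition6: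
  fixes G :: "('a, 'b) monoid_scheme"
  assumes "group G" and "finite (carrier G)" and "m_star G = order G"
  shows "\<forall>N. N \<lhd> G \<and> cyclic_group (subgroup_generated G N) \<longrightarrow> N = {\<one>\<^bsub>G\<^esub>}"
  using group.prop6_aux[OF assms] .

end
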